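(* The map $\Phi:\mathcal{C}\to\bar{\mathbf K}$, $C\mapsto K_C$, is a bijection, and its inverse is given by $\Phi^{-1}(K)=C_K$ for all $K\in\bar{\mathbf K}$.
   Context: Let $\mathcal{X}$ be a nonempty set and let $\mathscr{V}$ be the real vector space of all functions $u:\mathcal{X}\to\mathbb{R}$ (options), with pointwise operations. For $u,v\in\mathscr{V}$, $u\le v$ iff $u(x)\le v(x)$ for all $x\in\mathcal{X}$, and $u<v$ iff $u\le v$ and $u\neq v$. Let $\mathscr{V}_{>0}=\{u\in\mathscr{V}:0<u\}$ and $\mathscr{V}^s_{>0}=\{\{u\}:u\in\mathscr{V}_{>0}\}$. Let $\mathscr{Q}$ be the set of all finite subsets of $\mathscr{V}$ (including $\emptyset$). For $A\in\mathscr{Q}$ and $u\in\mathscr{V}$, $A-u=\{v-u:v\in A\}$. For a positive integer $n$, $\mathbb{R}^{n,+}=\{\boldsymbol\lambda\in\mathbb{R}^n:\lambda_j\ge0\ \forall j,\ \sum_j\lambda_j>0\}$, and for $\boldsymbol\lambda\in\mathbb{R}^n$, $\mathbf u=(u_1,\dots,u_n)\in\mathscr{V}^n$, $\boldsymbol\lambda\mathbf u=\sum_{j=1}^n\lambda_ju_j$. A choice function is a map $C:\mathscr{Q}\to\mathscr{Q}$ with $C(A)\subseteq A$ for all $A$; its rejection function is $R_C(A)=A\setminus C(A)$, and $K_C=\{A\in\mathscr{Q}:0\notin C(A\cup\{0\})\}$. $C$ is coherent if: (C0) $C(A)\neq\emptyset$ for all nonempty $A\in\mathscr{Q}$; (C1)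 for all $A\in\mathscr{Q}$ and $u\in A$: $u\in C(A)\iff 0\in C(A-u)$; (C2) $\{u\}\in K_C$ for all $u\in\mathscr{V}_{>0}$; (C3) for all $A,B\in K_C$ and all maps $\boldsymbol\lambda:A\times B\to\mathbb{R}^{2,+}$, $\{\boldsymbol\lambda(\mathbf u)\mathbf u:\mathbf u\in A\times B\}\in K_C$; (C4) $A\subseteq B\Rightarrow R_C(A)\subseteq R_C(B)$ for all $A,B\in\mathscr{Q}$. $\mathcal{C}$ denotes the set of coherent choice functions. A set of desirable option sets is any $K\subseteq\mathscr{Q}$. It is coherent if for all $A,B\in K$: (K0) $A\setminus\{0\}\in K$; (K1) $\{0\}\notin K$; (K2) $\mathscr{V}^s_{>0}\subseteq K$; (K3) $\{\boldsymbol\lambda(\mathbf u)\mathbf u:\mathbf u\in A\times B\}\in K$ for every map $\boldsymbol\lambda:A\times B\to\mathbb{R}^{2,+}$; (K4) $A\cup Q\in K$ for all $Q\in\mathscr{Q}$. $\bar{\mathbf K}$ denotes the set of coherent sets of desirable option sets. For $K\subseteq\mathscr{Q}$, the choice function $C_K$ is defined by $C_K(A)=\{u\in A:(A-u)\setminus\{0\}\notin K\}$ for all $A\in\mathscr{Q}$. *)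

theory Defs
  imports Complex_Main
begin

type_synonym 'x opt = "'x \<Rightarrow> real"

definition zopt :: "'x opt" where "zopt = (\<lambda>x. 0)"

definition Qsets :: "'x opt set set" where
  "Qsets = {A. finite A}"

definition Vpos :: "'x opt set" where
  "Vpos = {u. (\<forall>x. 0 \<le> u x) \<and> u \<noteq> zopt}"

definition Vpos_s :: "'x opt set set" where
  "Vpos_s = {{u} | u. u \<in> Vpos}"

definition R2plus :: "(real \<times> real) set" where
  "R2plus = {(a, b). a \<ge> 0 \<and> b \<ge> 0 \<and> a + b > 0}"

definition shift :: "'x opt set \<Rightarrow> 'x opt \<Rightarrow> 'x opt set" where
  "shift A u = (\<lambda>v. (\<lambda>x. v x - u x)) ` A"

definition comb :: "'x opt set \<Rightarrow> 'x opt set \<Rightarrow> ('x opt \<times> 'x opt \<Rightarrow> real \<times> real) \<Rightarrow> 'x opt set" where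
  "comb A B lam = {(\<lambda>x. fst (lam p) * fst p x + snd (lam p) * snd p x) | p. p \<in> A \<times> B}"

text \<open>Choice functions are maps Q \<rightarrow> Q; represented as functions on all option sets
  that are fixed to be empty outside Q (so that they are determined by their values on Q).\<close>
definition choice_fun :: "('x opt set \<Rightarrow> 'x opt set) \<Rightarrow> bool" where
  "choice_fun C \<longleftrightarrow> (\<forall>A \<in> Qsets. C A \<subseteq> A) \<and> (\<forall>A. A \<notin> Qsets \<longrightarrow> C A = {})"

definition rej :: "('x opt set \<Rightarrow> 'x opt set) \<Rightarrow> 'x opt set \<Rightarrow> 'x opt set" where
  "rej C A = A - C A"

definition K_of :: "('x opt set \<Rightarrow> 'x opt set) \<Rightarrow> 'x opt set set" where
  "K_of C = {A \<in> Qsets. zopt \<notin> C (A \<union> {zopt})}"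

definition coherent_choice :: "('x opt set \<Rightarrow> 'x opt set) \<Rightarrow> bool" where
  "coherent_choice C \<longleftrightarrow> choice_fun C
    \<and> (\<forall>A \<in> Qsets. A \<noteq> {} \<longrightarrow> C A \<noteq> {})
    \<and> (\<forall>A \<in> Qsets. \<forall>u \<in> A. u \<in> C A \<longleftrightarrow> zopt \<in> C (shift A u))
    \<and> (\<forall>u \<in> Vpos. {u} \<in> K_of C)
    \<and> (\<forall>A \<in> K_of C. \<forall>B \<in> K_of C. \<forall>lam. (\<forall>p \<in> A \<times> B. lam p \<in> R2plus)
           \<longrightarrow> comb A B lam \<in> K_of C)
    \<and> (\<forall>A \<in> Qsets. \<forall>B \<in> Qsets. A \<subseteq> B \<longrightarrow> rej C A \<subseteq> rej C B)"

definition CohC :: "('x opt set \<Rightarrow> 'x opt set) set" where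
  "CohC = {C. coherent_choice C}"

definition coherent_K :: "'x opt set set \<Rightarrow> bool" where
  "coherent_K K \<longleftrightarrow> K \<subseteq> Qsets
    \<and> (\<forall>A \<in> K. A - {zopt} \<in> K)
    \<and> {zopt} \<notin> K
    \<and> Vpos_s \<subseteq> K
    \<and> (\<forall>A \<in> K. \<forall>B \<in> K. \<forall>lam. (\<forall>p \<in> A \<times> B. lam p \<in> R2plus) \<longrightarrow> comb A B lam \<in> K)
    \<and> (\<forall>A \<in> K. \<forall>Q \<in> Qsets. A \<union> Q \<in> K)"

definition CohK :: "'x opt set set set" where
  "CohK = {K. coherent_K K}"

definition C_of :: "'x opt set set \<Rightarrow> 'x opt set \<Rightarrow> 'x opt set" where
  "C_of K A = (if A \<in> Qsets then {u \<in> A. shift A u - {zopt} \<notin> K} else {})"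

end

theory Submission
  imports Defs
begin

lemma shift_zero[simp]: "shift A zopt = A"
  by (simp add: shift_def zopt_def)

lemma zero_in_shift: "u \<in> A \<Longrightarrow> zopt \<in> shift A u"
  unfolding shift_def zopt_def by (rule image_eqI[of _ _ u]) auto

lemma finite_shift: "finite A \<Longrightarrow> finite (shift A u)"
  by (simp add: shift_def)

lemma KofC_eq:
  fixes K :: "'a opt set set"
  assumes "coherent_K K"
  shows "K_of (C_of K) = K"
proof -
  have KQ: "K \<subseteq> Qsets" and K0: "\<forall>A \<in> K. A - {zopt} \<in> K"
    and K4: "\<forall>A \<in> K. \<forall>Q \<in> Qsets. A \<union> Q \<in> K" using assms unfolding coherent_K_def by auto
  have "A \<in> K \<longleftrightarrow> A - {zopt} \<in> K" if "A \<in> Qsets" for A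
  proof
    assume "A - {zopt} \<in> K"
    then have "(A - {zopt}) \<union> (A \<inter> {zopt}) \<in> K" using K4 by (auto simp: Qsets_def)
    moreover have "(A - {zopt}) \<union> (A \<inter> {zopt}) = A" by auto
    ultimately show "A \<in> K" by simp
  qed (use K0 in auto)
  moreover have "A \<union> {zopt} \<in> Qsets" if "A \<in> Qsets" for A using that by (simp add: Qsets_def)
  ultimately show ?thesis using KQ
    unfolding K_of_def C_of_def by auto
qed

lemma CofK_eq:
  fixes C :: "'a opt set \<Rightarrow> 'a opt set"
  assumes "coherent_choice C"
  shows "C_of (K_of C) = C"
proof
  fix A
  have cf: "choice_fun C" and C1: "\<forall>A \<in> Qsets. \<forall>u \<in> A. u \<in> C A \<longleftrightarrow> zopt \<in> C (shift A u)"
    using assms unfolding coherent_choice_def by auto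
  show "C_of (K_of C) A = C A"
  proof (cases "A \<in> Qsets")
    case False
    then show ?thesis using cf unfolding choice_fun_def C_of_def by auto
  next
    case True
    have "u \<in> C A \<longleftrightarrow> shift A u - {zopt} \<notin> K_of C" if "u \<in> A" for u
    proof -
      have e: "(shift A u - {zopt}) \<union> {zopt} = shift A u" using zero_in_shift[OF that] by auto
      have "shift A u - {zopt} \<in> Qsets" using True by (simp add: Qsets_def finite_shift)
      then show ?thesis using C1 True that e unfolding K_of_def by auto
    qed
    moreover have "C A \<subseteq> A" using cf True unfolding choice_fun_def by auto
    ultimately show ?thesis using True unfolding C_of_def by auto
  qed
qed

lemma KofC_coherent:
  fixes C :: "'a opt set \<Rightarrow> 'a opt set"
  assumes "coherent_choice C"
  shows "coherent_K (K_of C)"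
proof -
  have cf: "choice_fun C" and C0: "\<forall>A \<in> Qsets. A \<noteq> {} \<longrightarrow> C A \<noteq> {}"
    and C2: "\<forall>u \<in> Vpos. {u} \<in> K_of C"
    and C3: "\<forall>A \<in> K_of C. \<forall>B \<in> K_of C. \<forall>lam. (\<forall>p \<in> A \<times> B. lam p \<in> R2plus)
           \<longrightarrow> comb A B lam \<in> K_of C"
    and C4: "\<forall>A \<in> Qsets. \<forall>B \<in> Qsets. A \<subseteq> B \<longrightarrow> rej C A \<subseteq> rej C B"
    using assms unfolding coherent_choice_def by auto
  have "K_of C \<subseteq> Qsets" unfolding K_of_def by auto
  moreover have "\<forall>A \<in> K_of C. A - {zopt} \<in> K_of C"
  proof
    fix A :: "'a opt set" assume "A \<in> K_of C"
    moreover have "A - {zopt} \<union> {zopt} = A \<union> {zopt}" by auto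
    ultimately show "A - {zopt} \<in> K_of C" unfolding K_of_def Qsets_def by auto
  qed
  moreover have "{zopt} \<notin> K_of C"
  proof
    assume "{zopt} \<in> K_of C"
    then have "zopt \<notin> C {zopt}" unfolding K_of_def by auto
    moreover have "C {zopt} \<noteq> {}" using C0 by (auto simp: Qsets_def)
    moreover have "C {zopt} \<subseteq> {zopt}" using cf by (auto simp: choice_fun_def Qsets_def)
    ultimately show False by auto
  qed
  moreover have "Vpos_s \<subseteq> K_of C" using C2 unfolding Vpos_s_def by auto
  moreover have "\<forall>A \<in> K_of C. \<forall>Q \<in> Qsets. A \<union> Q \<in> K_of C"
  proof (intro ballI)
    fix A Q :: "'a opt set" assume A: "A \<in> K_of C" and Q: "Q \<in> Qsets"
    have f: "A \<union> {zopt} \<in> Qsets" "A \<union> Q \<union> {zopt} \<in> Qsets" "A \<union> Q \<in> Qsets"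
      using A Q by (auto simp: K_of_def Qsets_def)
    have "rej C (A \<union> {zopt}) \<subseteq> rej C (A \<union> Q \<union> {zopt})"
      by (rule C4[rule_format, OF f(1) f(2)]) auto
    moreover have "zopt \<in> rej C (A \<union> {zopt})" using A unfolding K_of_def rej_def by auto
    ultimately show "A \<union> Q \<in> K_of C" using f unfolding K_of_def rej_def by auto
  qed
  ultimately show ?thesis using C3 unfolding coherent_K_def by blast
qed

lemma elim_step:
  fixes K :: "'a opt set set"
  assumes K: "coherent_K K" and vF: "v \<notin> F" and fin: "finite F" and uF: "u \<in> F"
    and Bu: "shift (insert v F) u - {zopt} \<in> K"
    and Bv: "shift (insert v F) v - {zopt} \<in> K"
  shows "shift F u - {zopt} \<in> K"
proof -
  have K0: "\<forall>A \<in> K. A - {zopt} \<in> K"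
    and K3: "\<forall>A \<in> K. \<forall>B \<in> K. \<forall>lam. (\<forall>p \<in> A \<times> B. lam p \<in> R2plus) \<longrightarrow> comb A B lam \<in> K"
    and K4: "\<forall>A \<in> K. \<forall>Q \<in> Qsets. A \<union> Q \<in> K" using K unfolding coherent_K_def by auto
  define vu where "vu = (\<lambda>x. v x - u x)"
  define lam :: "'a opt \<times> 'a opt \<Rightarrow> real \<times> real"
    where "lam p = (if fst p = vu then (1,1) else (1,0))" for p
  have "comb (shift (insert v F) u - {zopt}) (shift (insert v F) v - {zopt}) lam \<in> K"
    using K3 Bu Bv by (auto simp: lam_def R2plus_def)
  moreover have "comb (shift (insert v F) u - {zopt}) (shift (insert v F) v - {zopt}) lam \<subseteq> shift F u"
  proof
    fix w assume "w \<in> comb (shift (insert v F) u - {zopt}) (shift (insert v F) v - {zopt}) lam"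
    then obtain p where p: "p \<in> (shift (insert v F) u - {zopt}) \<times> (shift (insert v F) v - {zopt})"
      and w: "w = (\<lambda>x. fst (lam p) * fst p x + snd (lam p) * snd p x)"
      unfolding comb_def by blast
    have "fst p \<in> shift (insert v F) u" using p by auto
    then obtain a where a: "a \<in> insert v F" and pa: "fst p = (\<lambda>x. a x - u x)"
      unfolding shift_def by blast
    have "snd p \<in> shift (insert v F) v" and sz: "snd p \<noteq> zopt" using p by auto
    then obtain b where b: "b \<in> insert v F" and pb: "snd p = (\<lambda>x. b x - v x)"
      unfolding shift_def by blast
    have bz: "(\<lambda>x. b x - v x) \<noteq> zopt" using sz pb by simp
    have pp: "p = ((\<lambda>x. a x - u x), (\<lambda>x. b x - v x))" using pa pb by (simp add: prod_eq_iff)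
    have w: "w = (\<lambda>x. fst (lam ((\<lambda>x. a x - u x), (\<lambda>x. b x - v x))) * (a x - u x)
                 + snd (lam ((\<lambda>x. a x - u x), (\<lambda>x. b x - v x))) * (b x - v x))"
      using w pp by simp
    have "b \<noteq> v" using bz by (auto simp: zopt_def)
    then have bF: "b \<in> F" using b by auto
    show "w \<in> shift F u"
    proof (cases "(\<lambda>x. a x - u x) = vu")
      case True
      then have "w = (\<lambda>x. b x - u x)" using w by (auto simp: lam_def vu_def fun_eq_iff)
      then show ?thesis using bF unfolding shift_def by auto
    next
      case False
      then have "a \<noteq> v" by (auto simp: vu_def)
      then have "a \<in> F" using a by auto
      moreover have "w = (\<lambda>x. a x - u x)" using w False by (auto simp: lam_def)
      ultimately show ?thesis unfolding shift_def by auto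
    qed
  qed
  ultimately have "shift F u \<in> K"
    using K4 fin by (metis Qsets_def finite_shift mem_Collect_eq sup.absorb2)
  then show ?thesis using K0 by auto
qed

lemma no_all_dominated:
  fixes K :: "'a opt set set"
  assumes K: "coherent_K K" and fin: "finite A" and ne: "A \<noteq> {}"
    and all: "\<forall>u \<in> A. shift A u - {zopt} \<in> K"
  shows False
  using fin ne all
proof (induction A rule: finite_ne_induct)
  case (singleton u)
  then have "shift {u} u - {zopt} \<in> K" by auto
  moreover have "shift {u} u = {zopt}" by (simp add: shift_def zopt_def)
  ultimately have "{} \<in> K" by simp
  then have "{} \<union> {zopt} \<in> K" using K unfolding coherent_K_def by (auto simp: Qsets_def)
  then show False using K unfolding coherent_K_def by auto
next
  case (insert v F)
  have "\<forall>u \<in> F. shift F u - {zopt} \<in> K"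
    using elim_step[OF K insert(3) insert(1)] insert(5) by auto
  then show False using insert(4) by auto
qed

lemma CofK_coherent:
  fixes K :: "'a opt set set"
  assumes K: "coherent_K K"
  shows "coherent_choice (C_of K)"
proof -
  have KQ: "K \<subseteq> Qsets"
    and K2: "Vpos_s \<subseteq> K"
    and K3: "\<forall>A \<in> K. \<forall>B \<in> K. \<forall>lam. (\<forall>p \<in> A \<times> B. lam p \<in> R2plus) \<longrightarrow> comb A B lam \<in> K"
    and K4: "\<forall>A \<in> K. \<forall>Q \<in> Qsets. A \<union> Q \<in> K" using K unfolding coherent_K_def by auto
  have eq: "K_of (C_of K) = K" using KofC_eq[OF K] .
  have "choice_fun (C_of K)" unfolding choice_fun_def C_of_def by auto
  moreover have "\<forall>A \<in> Qsets. A \<noteq> {} \<longrightarrow> C_of K A \<noteq> {}"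
  proof (intro ballI impI)
    fix A :: "'a opt set" assume A: "A \<in> Qsets" "A \<noteq> {}"
    show "C_of K A \<noteq> {}"
    proof
      assume "C_of K A = {}"
      then have "\<forall>u \<in> A. shift A u - {zopt} \<in> K" using A unfolding C_of_def by auto
      then show False using no_all_dominated[OF K _ A(2)] A(1) by (auto simp: Qsets_def)
    qed
  qed
  moreover have "\<forall>A \<in> Qsets. \<forall>u \<in> A. u \<in> C_of K A \<longleftrightarrow> zopt \<in> C_of K (shift A u)"
  proof (intro ballI)
    fix A :: "'a opt set" and u assume A: "A \<in> Qsets" and u: "u \<in> A"
    have "shift A u \<in> Qsets" using A by (simp add: Qsets_def finite_shift)
    then show "u \<in> C_of K A \<longleftrightarrow> zopt \<in> C_of K (shift A u)"
      using A u zero_in_shift[OF u] unfolding C_of_def by auto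
  qed
  moreover have "\<forall>u \<in> Vpos. {u} \<in> K_of (C_of K)" using K2 eq unfolding Vpos_s_def by auto
  moreover have "\<forall>A \<in> Qsets. \<forall>B \<in> Qsets. A \<subseteq> B \<longrightarrow> rej (C_of K) A \<subseteq> rej (C_of K) B"
  proof (intro ballI impI subsetI)
    fix A B :: "'a opt set" and u assume A: "A \<in> Qsets" and B: "B \<in> Qsets" and AB: "A \<subseteq> B"
      and u: "u \<in> rej (C_of K) A"
    have uA: "u \<in> A" and h: "shift A u - {zopt} \<in> K" using u A unfolding rej_def C_of_def by auto
    have "(shift A u - {zopt}) \<union> (shift B u - {zopt}) \<in> K"
      using K4 h B by (auto simp: Qsets_def finite_shift)
    moreover have "(shift A u - {zopt}) \<union> (shift B u - {zopt}) = shift B u - {zopt}"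
      using AB unfolding shift_def by auto
    ultimately show "u \<in> rej (C_of K) B" using B AB uA unfolding rej_def C_of_def by auto
  qed
  ultimately show ?thesis using K3 eq unfolding coherent_choice_def by simp
qed

theorem theorem2:
  shows "bij_betw (K_of :: ('x opt set \<Rightarrow> 'x opt set) \<Rightarrow> 'x opt set set) CohC CohK
         \<and> (\<forall>K \<in> (CohK :: 'x opt set set set). inv_into CohC K_of K = C_of K)"
proof -
  have inj: "inj_on (K_of :: ('x opt set \<Rightarrow> 'x opt set) \<Rightarrow> 'x opt set set) CohC"
  proof (rule inj_onI)
    fix C1 C2 :: "'x opt set \<Rightarrow> 'x opt set"
    assume "C1 \<in> CohC" "C2 \<in> CohC" "K_of C1 = K_of C2"
    then show "C1 = C2" using CofK_eq unfolding CohC_def by (metis mem_Collect_eq)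
  qed
  have img: "K_of ` CohC = (CohK :: 'x opt set set set)"
  proof
    show "K_of ` CohC \<subseteq> (CohK :: 'x opt set set set)"
      using KofC_coherent unfolding CohC_def CohK_def by auto
    show "(CohK :: 'x opt set set set) \<subseteq> K_of ` CohC"
    proof
      fix K :: "'x opt set set" assume "K \<in> CohK"
      then have K: "coherent_K K" by (simp add: CohK_def)
      show "K \<in> K_of ` CohC"
        using KofC_eq[OF K] CofK_coherent[OF K] unfolding CohC_def by (metis image_eqI mem_Collect_eq)
    qed
  qed
  have "\<forall>K \<in> (CohK :: 'x opt set set set). inv_into CohC K_of K = C_of K"
  proof
    fix K :: "'x opt set set" assume "K \<in> CohK"
    then have K: "coherent_K K" by (simp add: CohK_def)
    show "inv_into CohC K_of K = C_of K"
      by (rule inv_into_f_eq[OF inj]) (use CofK_coherent[OF K] KofC_eq[OF K] in \<open>auto simp: CohC_def\<close>)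
  qed
  then show ?thesis using inj img unfolding bij_betw_def by simp
qed

end
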